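(* Let $k\ge1$, $\lambda=(\lambda_1,\dots,\lambda_k)\in(0,\infty)^k$ and $f(x)=\prod_{i=1}^k{\sf Exp}[\lambda_i,x_i]$. Then for all $x\in(0,\infty)^k$, $${\sf Op}_k(f)(x)=\sum_{\tau}w_\tau(\lambda)\prod_{i=1}^k{\sf Exp}\big[F_{\tau,i}(\lambda),x_i\big],$$ the sum being over all permutations $\tau$ of $\{0,1,\dots,k\}$.
   Context: ${\sf Exp}[\lambda,x]=\lambda e^{-\lambda x}1_{x\ge0}$. $\Phi_g$ is the centred Gaussian density of variance $g>0$. For $x\in\mathbb{R}^k$ set $\bar x_0=0$, $\bar x_i=x_1+\dots+x_i$. For $g\in(0,\infty)^k$, $\Psi_g(x)=\sum_\tau\prod_{i=1}^k\Phi_{g_i}(\bar x_{\tau(i)}-\bar x_{\tau(i-1)})1_{x_i>0}$ (sum over permutations $\tau$ of $\{0,\dots,k\}$), and ${\sf Op}_k(f)(x)=\int_{(0,\infty)^k}f(g)\Psi_g(x)\,dg_1\cdots dg_k$. For a permutation $\tau$ of $\{0,\dots,k\}$, $c\in(0,\infty)^k$ and $i\in\{1,\dots,k\}$: $E_{\tau,i}=\{j\in\{1,\dots,k\}:\min(\tau(j-1),\tau(j))<i\le\max(\tau(j-1),\tau(j))\}$ (the indices $j$ such that $x_i$ appears in $|\bar x_{\tau(j)}-\bar x_{\tau(j-1)}|$), $F_{\tau,i}(c)=\sum_{j\in E_{\tau,i}}\sqrt{2c_j}$, and $w_\tau(c)=2^{-k}\prod_{i=1}^k\sqrt{2c_i}/F_{\tau,i}(c)$.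 *)

theory Defs
  imports "HOL-Analysis.Analysis"
begin

definition ExpD :: "real \<Rightarrow> real \<Rightarrow> real" where
  "ExpD lam x = (if x \<ge> 0 then lam * exp (- lam * x) else 0)"

definition Phi :: "real \<Rightarrow> real \<Rightarrow> real" where
  "Phi g y = exp (- (y\<^sup>2) / (2 * g)) / sqrt (2 * pi * g)"

definition xbar :: "(nat \<Rightarrow> real) \<Rightarrow> nat \<Rightarrow> real" where
  "xbar x i = (\<Sum>j=1..i. x j)"

definition Psi :: "nat \<Rightarrow> (nat \<Rightarrow> real) \<Rightarrow> (nat \<Rightarrow> real) \<Rightarrow> real" where
  "Psi k g x = (\<Sum>\<tau>\<in>{\<tau>. \<tau> permutes {0..k}}.
      \<Prod>i=1..k. Phi (g i) (xbar x (\<tau> i) - xbar x (\<tau> (i - 1))) * (if x i > 0 then 1 else 0))"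

text \<open>Op_k(f)(x) = integral over (0,oo)^k of f(g) Psi_g(x) dg (Lebesgue measure on R^k,
  realised as the product of k copies of lborel on coordinates 1..k).\<close>
definition Op :: "nat \<Rightarrow> ((nat \<Rightarrow> real) \<Rightarrow> real) \<Rightarrow> (nat \<Rightarrow> real) \<Rightarrow> real" where
  "Op k f x = (\<integral>g. indicator (PiE {1..k} (\<lambda>_. {0<..})) g * f g * Psi k g x
                  \<partial>(PiM {1..k} (\<lambda>_. lborel)))"

definition E_set :: "nat \<Rightarrow> (nat \<Rightarrow> nat) \<Rightarrow> nat \<Rightarrow> nat set" where
  "E_set k \<tau> i = {j\<in>{1..k}. min (\<tau> (j - 1)) (\<tau> j) < i \<and> i \<le> max (\<tau> (j - 1)) (\<tau> j)}"

definition F_fun :: "nat \<Rightarrow> (nat \<Rightarrow> nat) \<Rightarrow> nat \<Rightarrow> (nat \<Rightarrow> real) \<Rightarrow> real" where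
  "F_fun k \<tau> i c = (\<Sum>j\<in>E_set k \<tau> i. sqrt (2 * c j))"

definition w_fun :: "nat \<Rightarrow> (nat \<Rightarrow> nat) \<Rightarrow> (nat \<Rightarrow> real) \<Rightarrow> real" where
  "w_fun k \<tau> c = (1 / 2 ^ k) * (\<Prod>i=1..k. sqrt (2 * c i) / F_fun k \<tau> i c)"

end

theory Submission
  imports Defs "HOL-Probability.Probability"
begin


lemma lborel_to_HK:
  fixes f :: "real \<Rightarrow> real"
  assumes h: "has_bochner_integral lborel (\<lambda>x. indicator S x *\<^sub>R f x) I"
    and m: "(\<lambda>x. indicator S x *\<^sub>R f x) \<in> borel_measurable borel"
  shows "f absolutely_integrable_on S \<and> integral S f = I"
proof -
  have i: "integrable lborel (\<lambda>x. indicator S x *\<^sub>R f x)" using h by (simp add: has_bochner_integral_iff)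
  have e: "integral\<^sup>L lborel (\<lambda>x. indicator S x *\<^sub>R f x) = I" using h by (simp add: has_bochner_integral_iff)
  have m': "(\<lambda>x. indicator S x *\<^sub>R f x) \<in> borel_measurable lborel" using m by simp
  have si: "set_integrable lebesgue S f"
    unfolding set_integrable_def using integrable_completion[OF m'] i by simp
  moreover have "integral S f = I"
    using set_lebesgue_integral_eq_integral(2)[OF si] e integral_completion[OF m']
    unfolding set_lebesgue_integral_def by simp
  ultimately show ?thesis by simp
qed

lemma HK_to_lborel:
  fixes f :: "real \<Rightarrow> real"
  assumes h: "f absolutely_integrable_on S" "integral S f = I"
    and m: "(\<lambda>x. indicator S x *\<^sub>R f x) \<in> borel_measurable borel"
  shows "has_bochner_integral lborel (\<lambda>x. indicator S x *\<^sub>R f x) I"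
proof -
  have m': "(\<lambda>x. indicator S x *\<^sub>R f x) \<in> borel_measurable lborel" using m by simp
  have i: "integrable lborel (\<lambda>x. indicator S x *\<^sub>R f x)"
    using h(1) integrable_completion[OF m'] unfolding set_integrable_def by simp
  moreover have "integral\<^sup>L lborel (\<lambda>x. indicator S x *\<^sub>R f x) = I"
    using set_lebesgue_integral_eq_integral(2)[OF h(1)] h(2) integral_completion[OF m']
    unfolding set_lebesgue_integral_def by simp
  ultimately show ?thesis by (simp add: has_bochner_integral_iff)
qed

lemma gauss_half:
  "(\<lambda>x::real. exp (- x\<^sup>2)) absolutely_integrable_on {0<..} \<and> integral {0<..} (\<lambda>x::real. exp (- x\<^sup>2)) = sqrt pi / 2"
proof -
  have a: "(\<lambda>x::real. exp (- x\<^sup>2)) absolutely_integrable_on {0..} \<and> integral {0..} (\<lambda>x::real. exp (- x\<^sup>2)) = sqrt pi / 2"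
    by (rule lborel_to_HK[OF gaussian_moment_0]) measurable
  have n: "negligible {x \<in> {0..} - {0<..}. exp (- x\<^sup>2) \<noteq> (0::real)}"
    by (rule negligible_subset[of "{0}"]) auto
  have n2: "negligible {x \<in> {0<..} - {0..}. exp (- x\<^sup>2) \<noteq> (0::real)}"
    by (rule negligible_subset[of "{}"]) auto
  show ?thesis using a absolutely_integrable_spike_set_eq[OF n n2] integral_spike_set[OF n n2] by auto
qed

lemma gauss_full:
  "(\<lambda>x::real. exp (- x\<^sup>2)) absolutely_integrable_on UNIV \<and> integral UNIV (\<lambda>x::real. exp (- x\<^sup>2)) = sqrt pi"
proof -
  have "has_bochner_integral lborel (\<lambda>x::real. exp (- x\<^sup>2)) (2 *\<^sub>R (sqrt pi / 2))"
    by (rule has_bochner_integral_even_function[OF gaussian_moment_0]) simp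
  then have "has_bochner_integral lborel (\<lambda>x::real. indicator UNIV x *\<^sub>R exp (- x\<^sup>2)) (sqrt pi)" by simp
  then show ?thesis by (rule lborel_to_HK) measurable
qed

lemma scale_lemma:
  fixes f :: "real \<Rightarrow> real"
  assumes a: "a > 0" and S: "S \<in> sets lebesgue" and im: "(\<lambda>x. a * x) ` S = S"
    and f: "f absolutely_integrable_on S" "integral S f = I"
  shows "(\<lambda>u. f (a * u)) absolutely_integrable_on S \<and> integral S (\<lambda>u. f (a * u)) = I / a"
proof -
  have d: "\<And>x. x \<in> S \<Longrightarrow> ((\<lambda>x. a * x) has_field_derivative a) (at x within S)"
    by (auto intro!: derivative_eq_intros)
  have inj: "inj_on (\<lambda>x. a * x) S" using a by (auto simp: inj_on_def)
  have "(\<lambda>x. \<bar>a\<bar> * f (a * x)) absolutely_integrable_on S \<and> integral S (\<lambda>x. \<bar>a\<bar> * f (a * x)) = I"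
    using has_absolute_integral_change_of_variables_1'[OF S d inj, of f I] f im by simp
  then have h: "(\<lambda>x. a * f (a * x)) absolutely_integrable_on S" "integral S (\<lambda>x. a * f (a * x)) = I"
    using a by auto
  have fe: "(\<lambda>x. (1/a) * (a * f (a * x))) = (\<lambda>x. f (a * x))" using a by (auto simp: fun_eq_iff)
  have "(\<lambda>x. (1/a) * (a * f (a * x))) absolutely_integrable_on S"
    by (rule set_integrable_mult_right[OF h(1)])
  then have A: "(\<lambda>x. f (a * x)) absolutely_integrable_on S" unfolding fe .
  have "integral S (\<lambda>x. f (a * x)) = (1/a) * integral S (\<lambda>x. a * f (a * x))"
    unfolding fe[symmetric] by (rule integral_mult_right)
  also have "\<dots> = I / a" using h(2) by simp
  finally show ?thesis using A by simp
qed

lemma img_pos: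
  fixes a :: real assumes "a > 0" shows "(\<lambda>x::real. a * x) ` {0<..} = {0<..}"
proof (rule set_eqI, rule iffI)
  fix y assume "y \<in> (\<lambda>x. a * x) ` {0<..}" then show "y \<in> {0<..}" using assms by auto
next
  fix y :: real assume y: "y \<in> {0<..}"
  show "y \<in> (\<lambda>x. a * x) ` {0<..}"
    by (rule image_eqI[of y "\<lambda>x. a * x" "y / a"]) (use assms y in auto)
qed

lemma img_univ:
  fixes a :: real assumes "a > 0" shows "(\<lambda>x::real. a * x) ` UNIV = UNIV"
proof (rule set_eqI, rule iffI)
  fix y :: real
  show "y \<in> (\<lambda>x. a * x) ` UNIV"
    by (rule image_eqI[of y "\<lambda>x. a * x" "y / a"]) (use assms in auto)
qed auto

lemma gauss_half_scaled:
  assumes "a > 0"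
  shows "(\<lambda>u::real. exp (- (a * u)\<^sup>2)) absolutely_integrable_on {0<..} \<and>
     integral {0<..} (\<lambda>u::real. exp (- (a * u)\<^sup>2)) = sqrt pi / 2 / a"
  using scale_lemma[OF assms _ img_pos[OF assms] gauss_half[THEN conjunct1] gauss_half[THEN conjunct2]] by auto

lemma gauss_full_scaled:
  assumes "a > 0"
  shows "(\<lambda>u::real. exp (- (a * u)\<^sup>2)) absolutely_integrable_on UNIV \<and>
     integral UNIV (\<lambda>u::real. exp (- (a * u)\<^sup>2)) = sqrt pi / a"
  using scale_lemma[OF assms _ img_univ[OF assms] gauss_full[THEN conjunct1] gauss_full[THEN conjunct2]] by auto



lemma glasser:
  fixes al c :: real assumes al: "al > 0" and c0: "c \<ge> 0"
  shows "(\<lambda>u. exp (- (al * (u - c / u))\<^sup>2)) absolutely_integrable_on {0<..} \<and>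
         integral {0<..} (\<lambda>u. exp (- (al * (u - c / u))\<^sup>2)) = sqrt pi / (2 * al)"
proof (cases "c = 0")
  case True then show ?thesis using gauss_half_scaled[OF al] by simp
next
  case False then have c: "c > 0" using c0 by simp
  define S where "S = ({0<..} :: real set)"
  define F where "F = (\<lambda>v::real. exp (- (al * v)\<^sup>2))"
  define \<phi> where "\<phi> = (\<lambda>u::real. u - c / u)"
  have Sl: "S \<in> sets lebesgue" unfolding S_def by simp
  have dphi: "(\<phi> has_field_derivative (1 + c / u\<^sup>2)) (at u within S)" if "u \<in> S" for u
    using that unfolding S_def \<phi>_def
    by (auto intro!: derivative_eq_intros simp: power2_eq_square field_simps)
  have mono: "\<phi> u < \<phi> v" if "u \<in> S" "v \<in> S" "u < v" for u v
  proof -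
    have "c / v < c / u" using that c unfolding S_def by (intro divide_strict_left_mono) auto
    then show ?thesis using that unfolding \<phi>_def by simp
  qed
  have inj: "inj_on \<phi> S"
  proof (rule inj_onI)
    fix u v assume "u \<in> S" "v \<in> S" "\<phi> u = \<phi> v"
    then show "u = v" using mono by (metis less_irrefl linorder_neqE)
  qed
  have im: "\<phi> ` S = UNIV"
  proof (rule set_eqI, rule iffI)
    fix y :: real
    define r where "r = sqrt (y\<^sup>2 + 4 * c)"
    have r2: "r\<^sup>2 = y\<^sup>2 + 4 * c" unfolding r_def using c by (simp add: add_nonneg_nonneg)
    have "\<bar>y\<bar> < r" unfolding r_def using c by (intro real_less_rsqrt) simp
    then have up: "(y + r) / 2 > 0" by simp
    define u where "u = (y + r) / 2"
    have "4 * (u * u - c - y * u) = r * r - y * y - 4 * c" unfolding u_def by (simp add: field_simps)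
    then have "u * u - c = y * u" using r2 by (simp add: power2_eq_square)
    moreover have upos: "u > 0" using up u_def by simp
    ultimately have "\<phi> u = y" unfolding \<phi>_def by (simp add: field_simps)
    then show "y \<in> \<phi> ` S" using up u_def unfolding S_def by force
  qed auto
  have A1: "(\<lambda>u. \<bar>1 + c / u\<^sup>2\<bar> * F (\<phi> u)) absolutely_integrable_on S \<and>
      integral S (\<lambda>u. \<bar>1 + c / u\<^sup>2\<bar> * F (\<phi> u)) = sqrt pi / al"
    using has_absolute_integral_change_of_variables_1'[OF Sl dphi inj, of F "sqrt pi / al"] im
      gauss_full_scaled[OF al] unfolding F_def by simp
  define h where "h = (\<lambda>u. F (\<phi> u))"
  have hcont: "continuous_on S h"
    unfolding h_def F_def \<phi>_def S_def by (auto intro!: continuous_intros)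
  have hint: "h absolutely_integrable_on S"
  proof (rule measurable_bounded_by_integrable_imp_absolutely_integrable)
    show "h \<in> borel_measurable (lebesgue_on S)" by (rule continuous_imp_measurable_on_sets_lebesgue[OF hcont Sl])
    show "S \<in> sets lebesgue" by (rule Sl)
    show "(\<lambda>u. \<bar>1 + c / u\<^sup>2\<bar> * F (\<phi> u)) integrable_on S"
      using A1 set_lebesgue_integral_eq_integral(1) by blast
    fix u assume "u \<in> S"
    have "0 \<le> c / u\<^sup>2" using c by simp
    then show "norm (h u) \<le> \<bar>1 + c / u\<^sup>2\<bar> * F (\<phi> u)"
      unfolding h_def F_def by (simp add: mult_le_cancel_right1)
  qed
  have drho: "((\<lambda>u. c / u) has_field_derivative (- c / u\<^sup>2)) (at u within S)" if "u \<in> S" for u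
    using that unfolding S_def
    by (auto intro!: derivative_eq_intros simp: power2_eq_square field_simps)
  have injr: "inj_on (\<lambda>u. c / u) S" using c unfolding S_def by (auto simp: inj_on_def field_simps)
  have imr: "(\<lambda>u. c / u) ` S = S"
  proof (rule set_eqI, rule iffI)
    fix y assume "y \<in> (\<lambda>u. c / u) ` S" then show "y \<in> S" using c unfolding S_def by auto
  next
    fix y :: real assume y: "y \<in> S"
    show "y \<in> (\<lambda>u. c / u) ` S"
      by (rule image_eqI[of y "\<lambda>u. c / u" "c / y"]) (use c y in \<open>auto simp: S_def\<close>)
  qed
  have A2: "(\<lambda>u. \<bar>- c / u\<^sup>2\<bar> * h (c / u)) absolutely_integrable_on S \<and>
      integral S (\<lambda>u. \<bar>- c / u\<^sup>2\<bar> * h (c / u)) = integral S h"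
    using has_absolute_integral_change_of_variables_1'[OF Sl drho injr, of h "integral S h"] imr hint
    by simp
  have eq: "\<bar>- c / u\<^sup>2\<bar> * h (c / u) = c / u\<^sup>2 * h u" if "u \<in> S" for u
  proof -
    have "c / (c / u) = u" using c by simp
    then have "h (c / u) = h u" unfolding h_def F_def \<phi>_def
      by (simp add: power2_eq_square algebra_simps)
    then show ?thesis using c by simp
  qed
  have A3i: "(\<lambda>u. c / u\<^sup>2 * h u) absolutely_integrable_on S"
    by (rule absolutely_integrable_spike[OF A2[THEN conjunct1] negligible_empty]) (use eq in \<open>metis Diff_empty\<close>)
  have A3e: "integral S (\<lambda>u. c / u\<^sup>2 * h u) = integral S h"
    using A2 integral_cong[of S "\<lambda>u. \<bar>- c / u\<^sup>2\<bar> * h (c / u)" "\<lambda>u. c / u\<^sup>2 * h u"] eq by simp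
  have "sqrt pi / al = integral S (\<lambda>u. \<bar>1 + c / u\<^sup>2\<bar> * F (\<phi> u))" using A1 by simp
  also have "\<dots> = integral S (\<lambda>u. h u + c / u\<^sup>2 * h u)"
  proof (rule integral_cong)
    fix u assume "u \<in> S"
    have "0 \<le> c / u\<^sup>2" using c by simp
    then show "\<bar>1 + c / u\<^sup>2\<bar> * F (\<phi> u) = h u + c / u\<^sup>2 * h u" unfolding h_def by (simp add: algebra_simps)
  qed
  also have "\<dots> = integral S h + integral S (\<lambda>u. c / u\<^sup>2 * h u)"
    by (rule integral_add) (use hint A3i set_lebesgue_integral_eq_integral(1) in blast)+
  also have "\<dots> = 2 * integral S h" using A3e by simp
  finally have "integral S h = sqrt pi / (2 * al)" by simp
  then show ?thesis using hint unfolding h_def F_def \<phi>_def S_def by simp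
qed




lemma key_alg:
  fixes lam u d s :: real
  assumes s: "s > 0" "s * s = 2 * lam" and u: "u > 0"
  shows "lam * u\<^sup>2 + d\<^sup>2 / (2 * u\<^sup>2) = s * \<bar>d\<bar> + (sqrt lam * (u - (\<bar>d\<bar> / s) / u))\<^sup>2"
proof -
  have l: "lam = s * s / 2" using s by simp
  have l0: "lam \<ge> 0" using s by (simp add: l)
  have "(sqrt lam * (u - (\<bar>d\<bar> / s) / u))\<^sup>2 = lam * (u - (\<bar>d\<bar> / s) / u)\<^sup>2"
    using l0 by (simp add: power_mult_distrib)
  also have "\<dots> = lam * u\<^sup>2 + d\<^sup>2 / (2 * u\<^sup>2) - s * \<bar>d\<bar>"
    using s(1) u by (simp only: l) (simp add: field_simps power2_eq_square)
  finally show ?thesis by simp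
qed

lemma one_dim:
  fixes lam d :: real
  assumes lam: "lam > 0"
  shows "has_bochner_integral lborel (\<lambda>t. indicator {0<..} t *\<^sub>R (ExpD lam t * Phi t d))
           (sqrt (2 * lam) / 2 * exp (- sqrt (2 * lam) * \<bar>d\<bar>))"
proof -
  define S where "S = ({0<..} :: real set)"
  define f where "f = (\<lambda>t. ExpD lam t * Phi t d)"
  define s where "s = sqrt (2 * lam)"
  have s: "s > 0" "s * s = 2 * lam" unfolding s_def using lam by auto
  define al where "al = sqrt lam"
  have al: "al > 0" unfolding al_def using lam by simp
  define c where "c = \<bar>d\<bar> / s"
  have c: "c \<ge> 0" unfolding c_def using s by simp
  define K where "K = 2 * lam / sqrt (2 * pi)"
  define E where "E = exp (- s * \<bar>d\<bar>)"
  have Sl: "S \<in> sets lebesgue" unfolding S_def by simp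
  have dq: "((\<lambda>u. u\<^sup>2) has_field_derivative (2 * u)) (at u within S)" if "u \<in> S" for u
    by (auto intro!: derivative_eq_intros)
  have injq: "inj_on (\<lambda>u::real. u\<^sup>2) S" unfolding S_def
    by (auto simp: inj_on_def power2_eq_iff)
  have imq: "(\<lambda>u::real. u\<^sup>2) ` S = S"
  proof (rule set_eqI, rule iffI)
    fix y assume "y \<in> (\<lambda>u::real. u\<^sup>2) ` S" then show "y \<in> S" unfolding S_def by auto
  next
    fix y :: real assume y: "y \<in> S"
    show "y \<in> (\<lambda>u. u\<^sup>2) ` S"
      by (rule image_eqI[of y "\<lambda>u. u\<^sup>2" "sqrt y"]) (use y in \<open>auto simp: S_def\<close>)
  qed
  have G: "(\<lambda>u. exp (- (al * (u - c / u))\<^sup>2)) absolutely_integrable_on S \<and>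
         integral S (\<lambda>u. exp (- (al * (u - c / u))\<^sup>2)) = sqrt pi / (2 * al)"
    using glasser[OF al c] unfolding S_def .
  have pw: "\<bar>2 * u\<bar> * f (u\<^sup>2) = (K * E) * exp (- (al * (u - c / u))\<^sup>2)" if u: "u \<in> S" for u
  proof -
    have u0: "u > 0" using u unfolding S_def by simp
    have sq: "sqrt (2 * pi * u\<^sup>2) = sqrt (2 * pi) * u" using u0 by (simp add: real_sqrt_mult)
    have "\<bar>2 * u\<bar> * f (u\<^sup>2) = K * (exp (- lam * u\<^sup>2) * exp (- d\<^sup>2 / (2 * u\<^sup>2)))"
      unfolding f_def ExpD_def Phi_def K_def sq using u0 by (simp add: field_simps)
    also have "exp (- lam * u\<^sup>2) * exp (- d\<^sup>2 / (2 * u\<^sup>2)) = exp (- (lam * u\<^sup>2 + d\<^sup>2 / (2 * u\<^sup>2)))"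
      by (simp add: exp_add[symmetric])
    also have "lam * u\<^sup>2 + d\<^sup>2 / (2 * u\<^sup>2) = s * \<bar>d\<bar> + (al * (u - c / u))\<^sup>2"
      unfolding al_def c_def by (rule key_alg[OF s u0])
    also have "exp (- (s * \<bar>d\<bar> + (al * (u - c / u))\<^sup>2)) = E * exp (- (al * (u - c / u))\<^sup>2)"
      unfolding E_def by (simp add: exp_add[symmetric])
    finally show ?thesis by simp
  qed
  have L1: "(\<lambda>u. (K * E) * exp (- (al * (u - c / u))\<^sup>2)) absolutely_integrable_on S"
    using G set_integrable_mult_right by blast
  have L2: "integral S (\<lambda>u. (K * E) * exp (- (al * (u - c / u))\<^sup>2)) = K * E * (sqrt pi / (2 * al))"
    using G by (simp add: integral_mult_right)
  have L1': "(\<lambda>u. \<bar>2 * u\<bar> * f (u\<^sup>2)) absolutely_integrable_on S"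
    by (rule absolutely_integrable_spike[OF L1 negligible_empty]) (use pw in \<open>metis Diff_empty\<close>)
  have L2': "integral S (\<lambda>u. \<bar>2 * u\<bar> * f (u\<^sup>2)) = K * E * (sqrt pi / (2 * al))"
    using L2 integral_cong[of S "\<lambda>u. \<bar>2 * u\<bar> * f (u\<^sup>2)"] pw by simp
  have R: "f absolutely_integrable_on S \<and> integral S f = K * E * (sqrt pi / (2 * al))"
    using has_absolute_integral_change_of_variables_1'[OF Sl dq injq, of f "K * E * (sqrt pi / (2 * al))"]
      L1' L2' imq by simp
  have val: "K * E * (sqrt pi / (2 * al)) = sqrt (2 * lam) / 2 * exp (- sqrt (2 * lam) * \<bar>d\<bar>)"
  proof -
    have "K * (sqrt pi / (2 * al)) = sqrt (2 * lam) / 2"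
      unfolding K_def al_def using lam
      by (simp add: real_sqrt_mult field_simps)
    then have "K * E * (sqrt pi / (2 * al)) = sqrt (2 * lam) / 2 * E"
      by (metis mult.commute mult.assoc)
    then show ?thesis unfolding E_def s_def by simp
  qed
  have m: "(\<lambda>t. indicator S t *\<^sub>R f t) \<in> borel_measurable borel"
    unfolding S_def f_def ExpD_def Phi_def by measurable
  have "has_bochner_integral lborel (\<lambda>t. indicator S t *\<^sub>R f t) (K * E * (sqrt pi / (2 * al)))"
    by (rule HK_to_lborel[OF R[THEN conjunct1] R[THEN conjunct2] m])
  then show ?thesis unfolding val S_def f_def .
qed




lemma xbar_diff_le:
  assumes "a \<le> b"
  shows "xbar x b - xbar x a = (\<Sum>m\<in>{a<..b}. x m)"
proof -
  have "{1..b} = {1..a} \<union> {a<..b}" using assms by auto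
  moreover have "{1..a} \<inter> {a<..b} = {}" by auto
  ultimately have "xbar x b = xbar x a + (\<Sum>m\<in>{a<..b}. x m)"
    unfolding xbar_def by (simp add: sum.union_disjoint)
  then show ?thesis by simp
qed

lemma xbar_abs:
  assumes pos: "\<forall>i\<in>{1..k}. x i > 0" and a: "a \<le> k" and b: "b \<le> k"
  shows "\<bar>xbar x a - xbar x b\<bar> = (\<Sum>m\<in>{m\<in>{1..k}. min a b < m \<and> m \<le> max a b}. x m)"
proof -
  have set: "{m\<in>{1..k}. min a b < m \<and> m \<le> max a b} = {min a b<..max a b}" using a b by auto
  have nn: "0 \<le> (\<Sum>m\<in>{min a b<..max a b}. x m)"
    using pos a b by (intro sum_nonneg) (auto intro: less_imp_le)
  have "\<bar>xbar x a - xbar x b\<bar> = xbar x (max a b) - xbar x (min a b)"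
  proof (cases "a \<le> b")
    case True
    then have "xbar x a \<le> xbar x b" using xbar_diff_le[OF True, of x] nn by simp
    then show ?thesis using True by simp
  next
    case False
    then have "xbar x b \<le> xbar x a" using xbar_diff_le[of b a x] nn by simp
    then show ?thesis using False by simp
  qed
  also have "\<dots> = (\<Sum>m\<in>{min a b<..max a b}. x m)" by (rule xbar_diff_le) simp
  finally show ?thesis unfolding set .
qed

lemma E_set_nonempty:
  assumes \<tau>: "\<tau> permutes {0..k}" and m: "1 \<le> m" "m \<le> k"
  shows "E_set k \<tau> m \<noteq> {}"
proof
  assume E: "E_set k \<tau> m = {}"
  have inv: "(\<tau> j < m) = (\<tau> 0 < m)" if "j \<le> k" for j
    using that
  proof (induction j)
    case 0 then show ?case by simp
  next
    case (Suc j)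
    have "Suc j \<notin> E_set k \<tau> m" using E by simp
    then have "\<not> (min (\<tau> j) (\<tau> (Suc j)) < m \<and> m \<le> max (\<tau> j) (\<tau> (Suc j)))"
      using Suc.prems unfolding E_set_def by auto
    then have "(\<tau> (Suc j) < m) = (\<tau> j < m)" by (auto simp: min_def max_def split: if_splits)
    then show ?case using Suc by simp
  qed
  have im: "\<tau> ` {0..k} = {0..k}" by (rule permutes_image[OF \<tau>])
  obtain a where a: "a \<in> {0..k}" "\<tau> a = 0" using im m by (metis atLeastAtMost_iff image_iff le0)
  obtain b where b: "b \<in> {0..k}" "\<tau> b = m" using im m by (metis atLeastAtMost_iff image_iff le0)
  show False using inv[of a] inv[of b] a b m by auto
qed

lemma F_pos:
  assumes \<tau>: "\<tau> permutes {0..k}" and m: "1 \<le> m" "m \<le> k" and lam: "\<forall>i\<in>{1..k}. lam i > 0"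
  shows "F_fun k \<tau> m lam > 0"
proof -
  have fin: "finite (E_set k \<tau> m)" unfolding E_set_def by simp
  show ?thesis unfolding F_fun_def
    by (rule sum_pos[OF fin E_set_nonempty[OF \<tau> m]]) (use lam in \<open>auto simp: E_set_def\<close>)
qed

lemma alg_helper: fixes P Q e :: real shows "Q \<noteq> 0 \<Longrightarrow> P / 2 ^ k * e = (1 / 2 ^ k * (P / Q)) * (Q * e)"
  by (simp add: field_simps)

lemma tau_alg:
  assumes \<tau>: "\<tau> permutes {0..k}" and lam: "\<forall>i\<in>{1..k}. lam i > 0" and pos: "\<forall>i\<in>{1..k}. x i > 0"
  shows "(\<Prod>i\<in>{1..k}. sqrt (2 * lam i) / 2 * exp (- sqrt (2 * lam i) * \<bar>xbar x (\<tau> i) - xbar x (\<tau> (i - 1))\<bar>))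
       = w_fun k \<tau> lam * (\<Prod>i=1..k. ExpD (F_fun k \<tau> i lam) (x i))"
proof -
  define s where "s = (\<lambda>i. sqrt (2 * lam i))"
  define F where "F = (\<lambda>m. F_fun k \<tau> m lam)"
  define C where "C = (\<lambda>i m. min (\<tau> (i - 1)) (\<tau> i) < m \<and> m \<le> max (\<tau> (i - 1)) (\<tau> i))"
  have Fpos: "\<And>m. m \<in> {1..k} \<Longrightarrow> F m > 0" unfolding F_def using F_pos[OF \<tau> _ _ lam] by auto
  have tk: "\<And>j. j \<le> k \<Longrightarrow> \<tau> j \<le> k" using permutes_in_image[OF \<tau>] by auto
  have absD: "\<bar>xbar x (\<tau> i) - xbar x (\<tau> (i - 1))\<bar> = (\<Sum>m\<in>{m\<in>{1..k}. C i m}. x m)" if i: "i \<in> {1..k}" for i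
  proof -
    have "\<bar>xbar x (\<tau> i) - xbar x (\<tau> (i - 1))\<bar> =
        (\<Sum>m\<in>{m\<in>{1..k}. min (\<tau> i) (\<tau> (i - 1)) < m \<and> m \<le> max (\<tau> i) (\<tau> (i - 1))}. x m)"
    proof (rule xbar_abs[OF pos])
      show "\<tau> i \<le> k" using i by (intro tk) simp
      show "\<tau> (i - 1) \<le> k" using i by (intro tk) auto
    qed
    then show ?thesis unfolding C_def by (simp only: min.commute[of "\<tau> i"] max.commute[of "\<tau> i"])
  qed
  have sumeq: "(\<Sum>i\<in>{1..k}. s i * \<bar>xbar x (\<tau> i) - xbar x (\<tau> (i - 1))\<bar>) = (\<Sum>m\<in>{1..k}. F m * x m)"
  proof -
    have "(\<Sum>i\<in>{1..k}. s i * \<bar>xbar x (\<tau> i) - xbar x (\<tau> (i - 1))\<bar>)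
        = (\<Sum>i\<in>{1..k}. \<Sum>m\<in>{1..k}. if C i m then s i * x m else 0)"
    proof (rule sum.cong[OF refl])
      fix i assume i: "i \<in> {1..k}"
      show "s i * \<bar>xbar x (\<tau> i) - xbar x (\<tau> (i - 1))\<bar> = (\<Sum>m\<in>{1..k}. if C i m then s i * x m else 0)"
        unfolding absD[OF i] sum_distrib_left by (rule sum.inter_filter) simp
    qed
    also have "\<dots> = (\<Sum>m\<in>{1..k}. \<Sum>i\<in>{1..k}. if C i m then s i * x m else 0)" by (rule sum.swap)
    also have "\<dots> = (\<Sum>m\<in>{1..k}. F m * x m)"
    proof (rule sum.cong[OF refl])
      fix m assume m: "m \<in> {1..k}"
      have Fm: "F m = (\<Sum>i\<in>{i\<in>{1..k}. C i m}. s i)" unfolding F_def F_fun_def E_set_def C_def s_def ..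
      show "(\<Sum>i\<in>{1..k}. if C i m then s i * x m else 0) = F m * x m"
        unfolding Fm sum_distrib_right by (rule sum.inter_filter[symmetric]) simp
    qed
    finally show ?thesis .
  qed
  have nz: "(\<Prod>m\<in>{1..k}. F m) \<noteq> 0" using Fpos by (metis less_irrefl prod_pos)
  have "(\<Prod>i\<in>{1..k}. s i / 2 * exp (- s i * \<bar>xbar x (\<tau> i) - xbar x (\<tau> (i - 1))\<bar>))
      = (\<Prod>i\<in>{1..k}. s i) / 2 ^ k * exp (- (\<Sum>i\<in>{1..k}. s i * \<bar>xbar x (\<tau> i) - xbar x (\<tau> (i - 1))\<bar>))"
    (is "(\<Prod>i\<in>{1..k}. s i / 2 * exp (- s i * ?a i)) = _")
  proof -
    have "(\<Prod>i\<in>{1..k}. s i / 2 * exp (- s i * ?a i)) = (\<Prod>i\<in>{1..k}. s i / 2) * (\<Prod>i\<in>{1..k}. exp (- (s i * ?a i)))"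
      by (simp only: prod.distrib[symmetric] mult_minus_left)
    also have "(\<Prod>i\<in>{1..k}. s i / 2) = (\<Prod>i\<in>{1..k}. s i) / 2 ^ k" by (simp add: prod_dividef)
    also have "(\<Prod>i\<in>{1..k}. exp (- (s i * ?a i))) = exp (\<Sum>i\<in>{1..k}. - (s i * ?a i))" by (simp add: exp_sum)
    also have "(\<Sum>i\<in>{1..k}. - (s i * ?a i)) = - (\<Sum>i\<in>{1..k}. s i * ?a i)" by (simp add: sum_negf)
    finally show ?thesis .
  qed
  also have "\<dots> = (\<Prod>i\<in>{1..k}. s i) / 2 ^ k * exp (- (\<Sum>m\<in>{1..k}. F m * x m))" unfolding sumeq ..
  also have "\<dots> = (1 / 2 ^ k * ((\<Prod>i\<in>{1..k}. s i) / (\<Prod>m\<in>{1..k}. F m))) *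
        ((\<Prod>m\<in>{1..k}. F m) * exp (- (\<Sum>m\<in>{1..k}. F m * x m)))"
    by (rule alg_helper[OF nz])
  also have "\<dots> = w_fun k \<tau> lam * (\<Prod>i=1..k. ExpD (F_fun k \<tau> i lam) (x i))"
  proof -
    have "(\<Prod>i=1..k. ExpD (F_fun k \<tau> i lam) (x i)) = (\<Prod>m\<in>{1..k}. F m * exp (- (F m * x m)))"
      by (rule prod.cong[OF refl]) (use pos in \<open>auto simp: ExpD_def F_def less_imp_le\<close>)
    also have "\<dots> = (\<Prod>m\<in>{1..k}. F m) * exp (- (\<Sum>m\<in>{1..k}. F m * x m))"
      by (simp add: prod.distrib exp_sum sum_negf[symmetric])
    moreover have "w_fun k \<tau> lam = 1 / 2 ^ k * ((\<Prod>i\<in>{1..k}. s i) / (\<Prod>m\<in>{1..k}. F m))"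
      unfolding w_fun_def s_def F_def prod_dividef ..
    ultimately show ?thesis by simp
  qed
  finally show ?thesis unfolding s_def .
qed





lemma indicator_PiE_prod:
  fixes g :: "nat \<Rightarrow> real"
  assumes "finite I" "g \<in> extensional I"
  shows "indicator (PiE I (\<lambda>_. A)) g = (\<Prod>i\<in>I. indicator A (g i) :: real)"
proof (cases "\<forall>i\<in>I. g i \<in> A")
  case True
  then have "g \<in> PiE I (\<lambda>_. A)" using assms by (auto simp: PiE_iff)
  then show ?thesis using True by simp
next
  case False
  then obtain i where i: "i \<in> I" "g i \<notin> A" by blast
  then have "g \<notin> PiE I (\<lambda>_. A)" by (auto simp: PiE_iff)
  moreover have "(\<Prod>i\<in>I. indicator A (g i) :: real) = 0"
    using assms(1) by (rule prod_zero) (use i in \<open>auto intro!: bexI[of _ i] simp: indicator_def\<close>)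
  ultimately show ?thesis by simp
qed

theorem lemma1:
  fixes k :: nat and lam x :: "nat \<Rightarrow> real"
  assumes "k \<ge> 1"
    and "\<forall>i\<in>{1..k}. lam i > 0"
    and "\<forall>i\<in>{1..k}. x i > 0"
  shows "Op k (\<lambda>g. \<Prod>i=1..k. ExpD (lam i) (g i)) x =
    (\<Sum>\<tau>\<in>{\<tau>. \<tau> permutes {0..k}}. w_fun k \<tau> lam * (\<Prod>i=1..k. ExpD (F_fun k \<tau> i lam) (x i)))"
proof -
  note lam = assms(2) and pos = assms(3)
  define I where "I = {1..k}"
  define P where "P = {\<tau>. \<tau> permutes {0..k}}"
  define M where "M = PiM I (\<lambda>_. lborel :: real measure)"
  define D where "D = (\<lambda>(\<tau>::nat\<Rightarrow>nat) i. xbar x (\<tau> i) - xbar x (\<tau> (i - 1)))"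
  define \<phi> where "\<phi> = (\<lambda>\<tau> i t. indicator {0<..} t *\<^sub>R (ExpD (lam i) t * Phi t (D \<tau> i)))"
  interpret product_sigma_finite "\<lambda>_::nat. lborel :: real measure" by standard
  have finI: "finite I" unfolding I_def by simp
  have finP: "finite P" unfolding P_def by (rule finite_permutations) simp
  have hb: "has_bochner_integral lborel (\<phi> \<tau> i) (sqrt (2 * lam i) / 2 * exp (- sqrt (2 * lam i) * \<bar>D \<tau> i\<bar>))"
    if "i \<in> I" for \<tau> i
    unfolding \<phi>_def by (rule one_dim) (use lam that in \<open>auto simp: I_def\<close>)
  have int1: "integrable lborel (\<phi> \<tau> i)" if "i \<in> I" for \<tau> i
    using hb[OF that] by (simp add: has_bochner_integral_iff)
  have eq1: "indicator (PiE I (\<lambda>_. {0<..})) g * (\<Prod>i\<in>I. ExpD (lam i) (g i)) * Psi k g x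
      = (\<Sum>\<tau>\<in>P. \<Prod>i\<in>I. \<phi> \<tau> i (g i))" if g: "g \<in> space M" for g
  proof -
    have ext: "g \<in> extensional I" using g unfolding M_def by (simp add: space_PiM PiE_def)
    have ps: "Psi k g x = (\<Sum>\<tau>\<in>P. \<Prod>i\<in>I. Phi (g i) (D \<tau> i))"
      unfolding Psi_def P_def I_def D_def
      by (intro sum.cong refl prod.cong) (use pos in auto)
    have "indicator (PiE I (\<lambda>_. {0<..})) g * (\<Prod>i\<in>I. ExpD (lam i) (g i)) * Psi k g x
       = (\<Sum>\<tau>\<in>P. (\<Prod>i\<in>I. indicator {0<..} (g i)) * (\<Prod>i\<in>I. ExpD (lam i) (g i)) * (\<Prod>i\<in>I. Phi (g i) (D \<tau> i)))"
      unfolding ps indicator_PiE_prod[OF finI ext] by (simp add: sum_distrib_left)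
    also have "\<dots> = (\<Sum>\<tau>\<in>P. \<Prod>i\<in>I. \<phi> \<tau> i (g i))"
      unfolding \<phi>_def by (simp add: prod.distrib mult.assoc)
    finally show ?thesis .
  qed
  have "Op k (\<lambda>g. \<Prod>i=1..k. ExpD (lam i) (g i)) x = integral\<^sup>L M (\<lambda>g. \<Sum>\<tau>\<in>P. \<Prod>i\<in>I. \<phi> \<tau> i (g i))"
    unfolding Op_def M_def[symmetric] I_def[symmetric]
    by (rule Bochner_Integration.integral_cong[OF refl eq1])
  also have "\<dots> = (\<Sum>\<tau>\<in>P. integral\<^sup>L M (\<lambda>g. \<Prod>i\<in>I. \<phi> \<tau> i (g i)))"
    by (rule Bochner_Integration.integral_sum) (unfold M_def, rule product_integrable_prod[OF finI int1])
  also have "\<dots> = (\<Sum>\<tau>\<in>P. \<Prod>i\<in>I. integral\<^sup>L lborel (\<phi> \<tau> i))"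
    unfolding M_def by (intro sum.cong refl product_integral_prod[OF finI int1])
  also have "\<dots> = (\<Sum>\<tau>\<in>P. \<Prod>i\<in>I. sqrt (2 * lam i) / 2 * exp (- sqrt (2 * lam i) * \<bar>D \<tau> i\<bar>))"
    by (intro sum.cong refl prod.cong has_bochner_integral_integral_eq hb)
  also have "\<dots> = (\<Sum>\<tau>\<in>P. w_fun k \<tau> lam * (\<Prod>i=1..k. ExpD (F_fun k \<tau> i lam) (x i)))"
    by (intro sum.cong refl) (unfold I_def D_def, rule tau_alg[OF _ lam pos], simp add: P_def)
  finally show ?thesis unfolding P_def .
qed


end
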